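(* Let $x\in\mathbb{R}_{>0}$. There is no atomic restaking network $G=(V,S,\sigma,w,\theta,\pi)$ satisfying all three of the following conditions: (1) $\sum_{v\in V}\sigma(v) < x\cdot |S|$; (2) for every service $s\in S$, $\sum_{v\in V} w(v,s)=x$; (3) for every service $s\in S$, in the network $G_1=(V,S_1,\sigma_1,w_1,\theta_1,\pi_1)=G\searrow\{s\}$ obtained when the single service $s$ is Byzantine, every remaining service $s'\in S\setminus\{s\}$ satisfies $\sum_{v\in V} w_1(v,s')=x$.
   Context: A restaking network is a tuple $G=(V,S,\sigma,w,\theta,\pi)$ where $V$ is a finite nonempty set of validators, $S$ is a finite set of services, $\sigma:V\to\mathbb{R}_{>0}$ is the stake, $w:V\times S\to\mathbb{R}_{\ge 0}$ is the allocation with $w(v,s)\le\sigma(v)$ for all $v,s$, $\theta:S\to[0,1]$ is the attack threshold and $\pi:S\to\mathbb{R}_{>0}$ is the attack prize. The network is atomic if $w(v,s)\in\{0,\sigma(v)\}$ for all $v\in V$, $s\in S$. Byzantine transition: for $S^B\subseteq S$, the network $G\searrow S^B=(V,S_1,\sigma_1,w_1,\theta_1,\pi_1)$ is defined by $S_1=S\setminus S^B$, $\sigma_1(v)=\max\bigl(0,\sigma(v)-\sum_{s\in S^B}w(v,s)\bigr)$, $w_1(v,s)=\min(w(v,s),\sigma_1(v))$ for $s\in S_1$, and $\theta_1,\pi_1$ the restrictions of $\theta,\pi$ to $S_1$. *)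

theory Defs
  imports Main Complex_Main
begin

record ('v, 's) rnet =
  vals  :: "'v set"
  servs :: "'s set"
  stake :: "'v \<Rightarrow> real"
  alloc :: "'v \<Rightarrow> 's \<Rightarrow> real"
  thr   :: "'s \<Rightarrow> real"
  prize :: "'s \<Rightarrow> real"

definition restaking_network :: "('v, 's) rnet \<Rightarrow> bool" where
  "restaking_network G \<longleftrightarrow>
     finite (vals G) \<and> vals G \<noteq> {} \<and> finite (servs G) \<and>
     (\<forall>v\<in>vals G. stake G v > 0) \<and>
     (\<forall>v\<in>vals G. \<forall>s\<in>servs G. 0 \<le> alloc G v s \<and> alloc G v s \<le> stake G v) \<and>
     (\<forall>s\<in>servs G. 0 \<le> thr G s \<and> thr G s \<le> 1) \<and>
     (\<forall>s\<in>servs G. prize G s > 0)"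

definition atomic :: "('v, 's) rnet \<Rightarrow> bool" where
  "atomic G \<longleftrightarrow> (\<forall>v\<in>vals G. \<forall>s\<in>servs G. alloc G v s = 0 \<or> alloc G v s = stake G v)"

definition byz :: "('v, 's) rnet \<Rightarrow> 's set \<Rightarrow> ('v, 's) rnet" where
  "byz G SB =
     (let S1 = servs G - SB;
          sig1 = (\<lambda>v. max 0 (stake G v - (\<Sum>s\<in>SB. alloc G v s)))
      in \<lparr> vals = vals G, servs = S1, stake = sig1,
           alloc = (\<lambda>v s. min (alloc G v s) (sig1 v)),
           thr = thr G, prize = prize G \<rparr>)"

end

theory Submission
  imports Defs
begin

theorem mainTheorem1:
  fixes x :: real
  assumes "x > 0"
  shows "\<not> (\<exists>G :: ('v, 's) rnet.
            restaking_network G \<and> atomic G \<and>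
            (\<Sum>v\<in>vals G. stake G v) < x * real (card (servs G)) \<and>
            (\<forall>s\<in>servs G. (\<Sum>v\<in>vals G. alloc G v s) = x) \<and>
            (\<forall>s\<in>servs G. \<forall>s'\<in>servs (byz G {s}).
                (\<Sum>v\<in>vals (byz G {s}). alloc (byz G {s}) v s') = x))"
proof
  assume "\<exists>G :: ('v, 's) rnet.
            restaking_network G \<and> atomic G \<and>
            (\<Sum>v\<in>vals G. stake G v) < x * real (card (servs G)) \<and>
            (\<forall>s\<in>servs G. (\<Sum>v\<in>vals G. alloc G v s) = x) \<and>
            (\<forall>s\<in>servs G. \<forall>s'\<in>servs (byz G {s}).
                (\<Sum>v\<in>vals (byz G {s}). alloc (byz G {s}) v s') = x)"
  then obtain G :: "('v,'s) rnet" where rn: "restaking_network G" and at: "atomic G"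
    and lt: "(\<Sum>v\<in>vals G. stake G v) < x * real (card (servs G))"
    and c2: "\<forall>s\<in>servs G. (\<Sum>v\<in>vals G. alloc G v s) = x"
    and c3: "\<forall>s\<in>servs G. \<forall>s'\<in>servs (byz G {s}).
                (\<Sum>v\<in>vals (byz G {s}). alloc (byz G {s}) v s') = x" by blast
  define V where "V = vals G"
  define S where "S = servs G"
  define \<sigma> where "\<sigma> = stake G"
  define w where "w = alloc G"
  have fV: "finite V" and fS: "finite S" and pos: "\<And>v. v \<in> V \<Longrightarrow> \<sigma> v > 0"
    and nn: "\<And>v s. v \<in> V \<Longrightarrow> s \<in> S \<Longrightarrow> 0 \<le> w v s"
    and le: "\<And>v s. v \<in> V \<Longrightarrow> s \<in> S \<Longrightarrow> w v s \<le> \<sigma> v"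
    using rn unfolding restaking_network_def V_def S_def \<sigma>_def w_def by auto
  have atm: "\<And>v s. v \<in> V \<Longrightarrow> s \<in> S \<Longrightarrow> w v s = 0 \<or> w v s = \<sigma> v"
    using at unfolding atomic_def V_def S_def \<sigma>_def w_def by auto
  define A where "A s = {v\<in>V. w v s = \<sigma> v}" for s
  have split: "\<And>v s. v \<in> V \<Longrightarrow> s \<in> S \<Longrightarrow> v \<notin> A s \<Longrightarrow> w v s = 0"
    using atm unfolding A_def by auto
  have sumA: "sum \<sigma> (A s) = x" if s: "s \<in> S" for s
  proof -
    have "(\<Sum>v\<in>V. w v s) = x" using c2 s unfolding V_def S_def w_def by auto
    moreover have "(\<Sum>v\<in>V. w v s) = (\<Sum>v\<in>V. if v \<in> A s then \<sigma> v else 0)"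
      by (rule sum.cong) (use split s in \<open>auto simp: A_def\<close>)
    moreover have "(\<Sum>v\<in>V. if v \<in> A s then \<sigma> v else 0) = sum \<sigma> (A s)"
      using fV by (simp add: sum.If_cases A_def Int_def)
    ultimately show ?thesis by simp
  qed
  have disj: "A s \<inter> A s' = {}" if s: "s \<in> S" and s': "s' \<in> S" and ne: "s \<noteq> s'" for s s'
  proof -
    have s'b: "s' \<in> servs (byz G {s})" using s' ne unfolding byz_def S_def Let_def by simp
    have e1: "(\<Sum>v\<in>V. alloc (byz G {s}) v s') = x"
      using c3 s s'b unfolding V_def S_def byz_def Let_def by auto
    have e2: "alloc (byz G {s}) v s' = (if v \<in> A s then 0 else w v s')" if v: "v \<in> V" for v
    proof (cases "v \<in> A s")
      case True
      hence "w v s = \<sigma> v" unfolding A_def by auto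
      then show ?thesis using True nn[OF v s'] unfolding byz_def Let_def w_def \<sigma>_def by simp
    next
      case False
      hence "w v s = 0" using split v s by auto
      then show ?thesis using False le[OF v s'] unfolding byz_def Let_def w_def \<sigma>_def
        using pos[OF v] by (simp add: \<sigma>_def)
    qed
    have "(\<Sum>v\<in>V. alloc (byz G {s}) v s') = (\<Sum>v\<in>V. if v \<in> A s then 0 else w v s')"
      using e2 by (rule sum.cong[OF refl])
    also have "\<dots> = (\<Sum>v\<in>V - A s. w v s')"
      using fV by (simp add: sum.If_cases Diff_eq)
    finally have a: "(\<Sum>v\<in>V - A s. w v s') = x" using e1 by simp
    have b: "(\<Sum>v\<in>V. w v s') = x" using c2 s' unfolding V_def S_def w_def by auto
    have AV: "A s \<subseteq> V" unfolding A_def by auto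
    have "(\<Sum>v\<in>V. w v s') = (\<Sum>v\<in>V - A s. w v s') + (\<Sum>v\<in>A s. w v s')"
      using fV AV by (metis add.commute sum.subset_diff)
    hence z: "(\<Sum>v\<in>A s. w v s') = 0" using a b by simp
    have "\<forall>v\<in>A s. w v s' = 0"
      using sum_nonneg_eq_0_iff[of "A s" "\<lambda>v. w v s'"] z fV AV nn s'
      by (meson finite_subset subsetD)
    then show ?thesis unfolding A_def using pos by fastforce
  qed
  have AV: "\<And>s. A s \<subseteq> V" unfolding A_def by auto
  have "x * real (card S) = (\<Sum>s\<in>S. sum \<sigma> (A s))" using sumA by simp
  also have "\<dots> = sum \<sigma> (\<Union>s\<in>S. A s)"
    using fS fV AV disj by (subst sum.UNION_disjoint) (auto intro: finite_subset)
  also have "\<dots> \<le> sum \<sigma> V"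
    using fV AV pos by (intro sum_mono2) (auto simp: less_imp_le)
  finally show False using lt unfolding V_def S_def \<sigma>_def by simp
qed

end
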